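(* Let $V$ be a vector space over a field $\mathbb K$ and $Mag(V)$ the free unital magmatic algebra on $V$. There is a unique linear map $\Delta:Mag(V)\to Mag(V)\otimes Mag(V)$ such that $\Delta(1)=1\otimes1$, $\Delta(v)=v\otimes1+1\otimes v$ for all $v\in V$, and $\Delta(x\cdot y)=\Delta(x)\cdot(1\otimes y)+(x\otimes1)\cdot\Delta(y)-x\otimes y$ for all $x,y\in Mag(V)$; this $\Delta$ is coassociative, and with it (and the counit given by projection onto $\mathbb K1$) $Mag(V)$ is an $As^c$-$Mag$-bialgebra.
   Context: $Mag(V)=\bigoplus_{n\ge0}\mathbb K[Y_{n-1}]\otimes V^{\otimes n}$, where $Y_{n-1}$ is the set of planar binary rooted trees with $n$ leaves and the $n=0$ summand is $\mathbb K1$; the product is $(t;v_1\dots v_p)\cdot(s;v_{p+1}\dots v_{p+q})=(t\vee s;v_1\dots v_{p+q})$, $t\vee s$ being the grafting of $t$ and $s$ on a new root, with unit $1$; $V$ is identified with the summand for the one-leaf tree. The product on $Mag(V)\otimes Mag(V)$ is $(x\otimes y)\cdot(x'\otimes y')=(x\cdot x')\otimes(y\cdot y')$. An $As^c$-$Mag$-bialgebra is a vector space with a unital (not necessarily associative) product $\cdot$ and a coassociative counital coproduct $\Delta$ with $\Delta(1)=1\otimes1$ satisfying the displayed compatibility relation. *)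

theory Defs
  imports "HOL-Library.Poly_Mapping"
begin

(* A vector space V over a field 'k is represented through a basis
  indexed by the type 'b, i.e. V = ('b \<Rightarrow>\<^sub>0 'k) sits inside Mag(V) as the span of the
  one-leaf trees. Mag(V) = \<Oplus>_n K[Y_{n-1}] \<otimes> V^{\<otimes>n} then has as basis the planar binary
  rooted trees with leaves labelled by basis elements, together with the unit 1
  (encoded as None). Tensor products of free modules are free on the product of bases. *)

datatype 'b ltree = Leaf 'b | Node "'b ltree" "'b ltree"

type_synonym 'b mbasis = "'b ltree option"

type_synonym ('b, 'k) mag = "'b mbasis \<Rightarrow>\<^sub>0 'k"
type_synonym ('b, 'k) mag2 = "('b mbasis \<times> 'b mbasis) \<Rightarrow>\<^sub>0 'k"
type_synonym ('b, 'k) mag3 = "('b mbasis \<times> 'b mbasis \<times> 'b mbasis) \<Rightarrow>\<^sub>0 'k"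

fun bmul :: "'b mbasis \<Rightarrow> 'b mbasis \<Rightarrow> 'b mbasis" where
  "bmul None y = y"
| "bmul x None = x"
| "bmul (Some t) (Some s) = Some (Node t s)"

definition scal :: "'k::field \<Rightarrow> ('a \<Rightarrow>\<^sub>0 'k) \<Rightarrow> ('a \<Rightarrow>\<^sub>0 'k)" where
  "scal c x = Poly_Mapping.map (\<lambda>a. c * a) x"

definition mag_mult :: "('b, 'k::field) mag \<Rightarrow> ('b, 'k) mag \<Rightarrow> ('b, 'k) mag" where
  "mag_mult x y = (\<Sum>a\<in>Poly_Mapping.keys x. \<Sum>b\<in>Poly_Mapping.keys y.
      Poly_Mapping.single (bmul a b) (Poly_Mapping.lookup x a * Poly_Mapping.lookup y b))"

definition mag_one :: "('b, 'k::field) mag" where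
  "mag_one = Poly_Mapping.single None 1"

definition inV :: "('b, 'k::field) mag \<Rightarrow> bool" where
  "inV v \<longleftrightarrow> Poly_Mapping.keys v \<subseteq> Some ` Leaf ` UNIV"

definition tens :: "('b, 'k::field) mag \<Rightarrow> ('b, 'k) mag \<Rightarrow> ('b, 'k) mag2" where
  "tens x y = (\<Sum>a\<in>Poly_Mapping.keys x. \<Sum>b\<in>Poly_Mapping.keys y.
      Poly_Mapping.single (a, b) (Poly_Mapping.lookup x a * Poly_Mapping.lookup y b))"

definition mag2_mult :: "('b, 'k::field) mag2 \<Rightarrow> ('b, 'k) mag2 \<Rightarrow> ('b, 'k) mag2" where
  "mag2_mult S T = (\<Sum>p\<in>Poly_Mapping.keys S. \<Sum>q\<in>Poly_Mapping.keys T.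
      Poly_Mapping.single (bmul (fst p) (fst q), bmul (snd p) (snd q))
        (Poly_Mapping.lookup S p * Poly_Mapping.lookup T q))"

definition is_linear :: "(('a \<Rightarrow>\<^sub>0 'k::field) \<Rightarrow> ('c \<Rightarrow>\<^sub>0 'k)) \<Rightarrow> bool" where
  "is_linear f \<longleftrightarrow> (\<forall>x y. f (x + y) = f x + f y) \<and> (\<forall>c x. f (scal c x) = scal c (f x))"

(* (\<Delta> \<otimes> id) and (id \<otimes> \<Delta>) applied to an element of Mag(V)\<otimes>Mag(V), both
  landing in Mag(V)^{\<otimes>3} (identified via the canonical associativity isomorphism). *)
definition tens_left :: "(('b, 'k::field) mag \<Rightarrow> ('b, 'k) mag2) \<Rightarrow> ('b, 'k) mag2 \<Rightarrow> ('b, 'k) mag3" where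
  "tens_left D T = (\<Sum>p\<in>Poly_Mapping.keys T. \<Sum>q\<in>Poly_Mapping.keys (D (Poly_Mapping.single (fst p) 1)).
      Poly_Mapping.single (fst q, snd q, snd p)
        (Poly_Mapping.lookup T p * Poly_Mapping.lookup (D (Poly_Mapping.single (fst p) 1)) q))"

definition tens_right :: "(('b, 'k::field) mag \<Rightarrow> ('b, 'k) mag2) \<Rightarrow> ('b, 'k) mag2 \<Rightarrow> ('b, 'k) mag3" where
  "tens_right D T = (\<Sum>p\<in>Poly_Mapping.keys T. \<Sum>q\<in>Poly_Mapping.keys (D (Poly_Mapping.single (snd p) 1)).
      Poly_Mapping.single (fst p, fst q, snd q)
        (Poly_Mapping.lookup T p * Poly_Mapping.lookup (D (Poly_Mapping.single (snd p) 1)) q))"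

definition counit :: "('b, 'k::field) mag \<Rightarrow> 'k" where
  "counit x = Poly_Mapping.lookup x None"

definition counit_left :: "('b, 'k::field) mag2 \<Rightarrow> ('b, 'k) mag" where
  "counit_left T = (\<Sum>p\<in>Poly_Mapping.keys T.
      scal (counit (Poly_Mapping.single (fst p) 1) * Poly_Mapping.lookup T p) (Poly_Mapping.single (snd p) 1))"

definition counit_right :: "('b, 'k::field) mag2 \<Rightarrow> ('b, 'k) mag" where
  "counit_right T = (\<Sum>p\<in>Poly_Mapping.keys T.
      scal (counit (Poly_Mapping.single (snd p) 1) * Poly_Mapping.lookup T p) (Poly_Mapping.single (fst p) 1))"

definition mag_coprod_spec :: "(('b, 'k::field) mag \<Rightarrow> ('b, 'k) mag2) \<Rightarrow> bool" where
  "mag_coprod_spec D \<longleftrightarrow>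
     is_linear D \<and>
     D mag_one = tens mag_one mag_one \<and>
     (\<forall>v. inV v \<longrightarrow> D v = tens v mag_one + tens mag_one v) \<and>
     (\<forall>x y. D (mag_mult x y) =
        mag2_mult (D x) (tens mag_one y) + mag2_mult (tens x mag_one) (D y) - tens x y)"

definition asc_mag_bialgebra :: "(('b, 'k::field) mag \<Rightarrow> ('b, 'k) mag2) \<Rightarrow> bool" where
  "asc_mag_bialgebra D \<longleftrightarrow>
     (\<forall>x :: ('b, 'k) mag. mag_mult mag_one x = x \<and> mag_mult x mag_one = x) \<and>
     is_linear D \<and>
     (\<forall>x. tens_left D (D x) = tens_right D (D x)) \<and>
     (\<forall>x y :: ('b, 'k) mag. counit (x + y) = counit x + counit y) \<and>
     (\<forall>c (x :: ('b, 'k) mag). counit (scal c x) = c * counit x) \<and>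
     (\<forall>x. counit_left (D x) = x \<and> counit_right (D x) = x) \<and>
     D mag_one = tens mag_one mag_one \<and>
     (\<forall>x y. D (mag_mult x y) =
        mag2_mult (D x) (tens mag_one y) + mag2_mult (tens x mag_one) (D y) - tens x y)"

end

theory Submission
  imports Defs
begin


lemma lookup_scal [simp]: "Poly_Mapping.lookup (scal c x) a = c * Poly_Mapping.lookup x a"
  by (simp add: scal_def map.rep_eq when_def)

lemma scal_add_right: "scal c (x + y) = scal c x + scal c y"
  by (rule poly_mapping_eqI) (simp add: lookup_add algebra_simps)
lemma scal_add_left: "scal (c + d) x = scal c x + scal d x"
  by (rule poly_mapping_eqI) (simp add: lookup_add algebra_simps)
lemma scal_diff_right: "scal c (x - y) = scal c x - scal c y"
  by (rule poly_mapping_eqI) (simp add: lookup_minus algebra_simps)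
lemma scal_zero_right [simp]: "scal c 0 = 0"
  by (rule poly_mapping_eqI) simp
lemma scal_zero_left [simp]: "scal 0 x = 0"
  by (rule poly_mapping_eqI) simp
lemma scal_one [simp]: "scal 1 x = x"
  by (rule poly_mapping_eqI) simp
lemma scal_scal: "scal c (scal d x) = scal (c * d) x"
  by (rule poly_mapping_eqI) simp
lemma scal_single: "scal c (Poly_Mapping.single a d) = Poly_Mapping.single a (c * d)"
  by (rule poly_mapping_eqI) (simp add: lookup_single when_def)
lemma scal_sum: "scal c (sum f A) = (\<Sum>a\<in>A. scal c (f a))"
  by (induction A rule: infinite_finite_induct) (simp_all add: scal_add_right)

definition lin :: "('a \<Rightarrow> ('c \<Rightarrow>\<^sub>0 'k::field)) \<Rightarrow> ('a \<Rightarrow>\<^sub>0 'k) \<Rightarrow> ('c \<Rightarrow>\<^sub>0 'k)" where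
  "lin f x = (\<Sum>a\<in>Poly_Mapping.keys x. scal (Poly_Mapping.lookup x a) (f a))"

lemma lin_superset:
  assumes "finite S" "Poly_Mapping.keys x \<subseteq> S"
  shows "lin f x = (\<Sum>a\<in>S. scal (Poly_Mapping.lookup x a) (f a))"
  unfolding lin_def
  by (rule sum.mono_neutral_left) (use assms in \<open>auto simp: in_keys_iff\<close>)

lemma lin_add [simp]: "lin f (x + y) = lin f x + lin f y"
proof -
  let ?S = "Poly_Mapping.keys x \<union> Poly_Mapping.keys y \<union> Poly_Mapping.keys (x + y)"
  have "lin f (x + y) = (\<Sum>a\<in>?S. scal (Poly_Mapping.lookup (x+y) a) (f a))"
    by (rule lin_superset) auto
  also have "\<dots> = (\<Sum>a\<in>?S. scal (Poly_Mapping.lookup x a) (f a)) + (\<Sum>a\<in>?S. scal (Poly_Mapping.lookup y a) (f a))"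
    by (simp add: lookup_add scal_add_left sum.distrib)
  also have "\<dots> = lin f x + lin f y"
    by (subst (1 2) lin_superset[where S="?S"]) auto
  finally show ?thesis .
qed

lemma lin_zero [simp]: "lin f 0 = 0"
  by (simp add: lin_def)

lemma lin_uminus [simp]: "lin f (- x) = - lin f x"
proof -
  have "lin f x + lin f (- x) = 0" using lin_add[of f x "-x"] by simp
  thus ?thesis by (rule minus_unique[symmetric])
qed

lemma lin_diff [simp]: "lin f (x - y) = lin f x - lin f y"
  using lin_add[of f x "-y"] by simp

lemma lin_scal [simp]: "lin f (scal c x) = scal c (lin f x)"
proof -
  have "lin f (scal c x) = (\<Sum>a\<in>Poly_Mapping.keys x. scal (Poly_Mapping.lookup (scal c x) a) (f a))"
    by (rule lin_superset) (auto simp: in_keys_iff)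
  then show ?thesis by (simp add: lin_def scal_sum scal_scal)
qed

lemma lin_single [simp]: "lin f (Poly_Mapping.single a c) = scal c (f a)"
  by (subst lin_superset[where S="{a}"]) auto

lemma lin_sum: "lin f (sum g A) = (\<Sum>i\<in>A. lin f (g i))"
  by (induction A rule: infinite_finite_induct) simp_all

lemma lin_fadd [simp]: "lin (\<lambda>a. f a + g a) x = lin f x + lin g x"
  by (simp add: lin_def scal_add_right sum.distrib)

lemma lin_fzero [simp]: "lin (\<lambda>a. 0) x = 0"
  by (simp add: lin_def)

lemma lin_fuminus [simp]: "lin (\<lambda>a. - f a) x = - lin f x"
proof -
  have "lin f x + lin (\<lambda>a. - f a) x = 0" using lin_fadd[of f "\<lambda>a. - f a" x] by simp
  thus ?thesis by (rule minus_unique[symmetric])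
qed

lemma lin_fdiff [simp]: "lin (\<lambda>a. f a - g a) x = lin f x - lin g x"
  using lin_fadd[of f "\<lambda>a. - g a" x] by simp

lemma lin_fscal [simp]: "lin (\<lambda>a. scal c (f a)) x = scal c (lin f x)"
  by (simp add: lin_def scal_sum scal_scal mult.commute)

lemma lin_if [simp]: "lin f (if P then x else y) = (if P then lin f x else lin f y)"
  by simp

lemma lin_comp [simp]: "lin f (lin g x) = lin (\<lambda>a. lin f (g a)) x"
proof -
  have "lin g x = (\<Sum>a\<in>Poly_Mapping.keys x. scal (Poly_Mapping.lookup x a) (g a))" by (rule lin_def)
  hence "lin f (lin g x) = (\<Sum>a\<in>Poly_Mapping.keys x. lin f (scal (Poly_Mapping.lookup x a) (g a)))"
    by (simp add: lin_sum)
  also have "\<dots> = lin (\<lambda>a. lin f (g a)) x" by (simp add: lin_def[of "\<lambda>a. lin f (g a)"])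
  finally show ?thesis .
qed

lemma lin_id [simp]: "lin (\<lambda>a. Poly_Mapping.single a 1) x = x"
proof (rule poly_mapping_eqI)
  fix k
  show "Poly_Mapping.lookup (lin (\<lambda>a. Poly_Mapping.single a 1) x) k = Poly_Mapping.lookup x k"
    by (simp add: lin_def lookup_sum scal_single lookup_single when_def in_keys_iff)
qed

lemma lin_cong_keys: "(\<And>a. a \<in> Poly_Mapping.keys x \<Longrightarrow> f a = g a) \<Longrightarrow> lin f x = lin g x"
  by (simp add: lin_def)

lemma lin_swap: "lin (\<lambda>p. lin (\<lambda>q. f p q) y) x = lin (\<lambda>q. lin (\<lambda>p. f p q) x) y"
  by (simp add: lin_def scal_sum scal_scal sum.swap[of _ "Poly_Mapping.keys x"] mult.commute)

lemma is_linear_lin: "is_linear (lin f)"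
  by (simp add: is_linear_def)

lemma linear_zero: assumes "is_linear F" shows "F 0 = 0"
proof -
  have "F (0 + 0) = F 0 + F 0" using assms unfolding is_linear_def by blast
  thus ?thesis by simp
qed

lemma linear_sum: assumes "is_linear F" shows "F (sum g A) = (\<Sum>i\<in>A. F (g i))"
  using assms by (induction A rule: infinite_finite_induct) (simp_all add: linear_zero is_linear_def)

lemma linear_lin: assumes "is_linear F" shows "F x = lin (\<lambda>a. F (Poly_Mapping.single a 1)) x"
proof -
  have "F x = F (lin (\<lambda>a. Poly_Mapping.single a 1) x)" by simp
  also have "\<dots> = (\<Sum>a\<in>Poly_Mapping.keys x. F (scal (Poly_Mapping.lookup x a) (Poly_Mapping.single a 1)))"
    unfolding lin_def by (rule linear_sum[OF assms])
  also have "\<dots> = lin (\<lambda>a. F (Poly_Mapping.single a 1)) x"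
    using assms by (simp add: lin_def is_linear_def)
  finally show ?thesis .
qed

lemma sum2_lin:
  "(\<Sum>a\<in>Poly_Mapping.keys x. \<Sum>b\<in>Poly_Mapping.keys (Y a).
      Poly_Mapping.single (g a b) (Poly_Mapping.lookup x a * Poly_Mapping.lookup (Y a) b))
   = lin (\<lambda>a. lin (\<lambda>b. Poly_Mapping.single (g a b) 1) (Y a)) x"
  by (simp add: lin_def scal_sum scal_single)



lemma bmul_None_right [simp]: "bmul x None = x"
  by (cases x) auto

lemma bmul_eq_None_iff [simp]: "bmul a b = None \<longleftrightarrow> a = None \<and> b = None"
  by (cases a; cases b) auto

definition m2 :: "('b, 'k::field) mag2 \<Rightarrow> ('b, 'k) mag2 \<Rightarrow> ('b, 'k) mag2" where
  "m2 S T = lin (\<lambda>p. lin (\<lambda>q. Poly_Mapping.single (bmul (fst p) (fst q), bmul (snd p) (snd q)) 1) T) S"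

definition m3 :: "('b, 'k::field) mag3 \<Rightarrow> ('b, 'k) mag3 \<Rightarrow> ('b, 'k) mag3" where
  "m3 S T = lin (\<lambda>p. lin (\<lambda>q. Poly_Mapping.single (bmul (fst p) (fst q),
      bmul (fst (snd p)) (fst (snd q)), bmul (snd (snd p)) (snd (snd q))) 1) T) S"

lemma mag2_mult_lin: "mag2_mult S T = m2 S T"
  unfolding mag2_mult_def m2_def by (rule sum2_lin)

lemma mag_mult_lin: "mag_mult x y = lin (\<lambda>a. lin (\<lambda>b. Poly_Mapping.single (bmul a b) 1) y) x"
  unfolding mag_mult_def by (rule sum2_lin)

lemma tens_lin: "tens x y = lin (\<lambda>a. lin (\<lambda>b. Poly_Mapping.single (a, b) 1) y) x"
  unfolding tens_def by (rule sum2_lin)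

fun Dt :: "'b ltree \<Rightarrow> ('b, 'k::field) mag2" where
  "Dt (Leaf b) = Poly_Mapping.single (Some (Leaf b), None) 1 + Poly_Mapping.single (None, Some (Leaf b)) 1"
| "Dt (Node t s) = m2 (Dt t) (Poly_Mapping.single (None, Some s) 1)
     + m2 (Poly_Mapping.single (Some t, None) 1) (Dt s) - Poly_Mapping.single (Some t, Some s) 1"

fun Db :: "'b mbasis \<Rightarrow> ('b, 'k::field) mag2" where
  "Db None = Poly_Mapping.single (None, None) 1"
| "Db (Some t) = Dt t"

lemma m2_unit_left [simp]: "m2 (Poly_Mapping.single (None, None) 1) S = S"
  by (simp add: m2_def)

lemma m2_unit_right [simp]: "m2 S (Poly_Mapping.single (None, None) 1) = S"
  by (simp add: m2_def)

lemma m2_single [simp]: "m2 (Poly_Mapping.single (a, b) 1) (Poly_Mapping.single (c, d) 1)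
   = Poly_Mapping.single (bmul a c, bmul b d) 1"
  by (simp add: m2_def)

lemma Db_mult: "Db (bmul a b) = m2 (Db a) (Poly_Mapping.single (None, b) 1)
   + m2 (Poly_Mapping.single (a, None) 1) (Db b) - Poly_Mapping.single (a, b) 1"
proof (cases a)
  case None
  then show ?thesis by simp
next
  case (Some t)
  then show ?thesis
  proof (cases b)
    case None
    then show ?thesis using Some by simp
  next
    case (Some s)
    then show ?thesis using \<open>a = Some t\<close> by simp
  qed
qed

definition TL :: "('b, 'k::field) mag2 \<Rightarrow> ('b, 'k) mag3" where
  "TL T = lin (\<lambda>p. lin (\<lambda>q. Poly_Mapping.single (fst q, snd q, snd p) 1) (Db (fst p))) T"

definition TR :: "('b, 'k::field) mag2 \<Rightarrow> ('b, 'k) mag3" where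
  "TR T = lin (\<lambda>p. lin (\<lambda>q. Poly_Mapping.single (fst p, fst q, snd q) 1) (Db (snd p))) T"

definition Mid :: "('b, 'k::field) mag2 \<Rightarrow> ('b, 'k) mag2 \<Rightarrow> ('b, 'k) mag3" where
  "Mid P S = lin (\<lambda>p. lin (\<lambda>q. Poly_Mapping.single (fst q, bmul (snd q) (fst p), snd p) 1) P) S"

lemma A_L: "TL (m2 S (Poly_Mapping.single (None, b) 1)) = m3 (TL S) (Poly_Mapping.single (None, None, b) 1)"
  by (simp add: TL_def m2_def m3_def)

lemma B_L: "TL (m2 (Poly_Mapping.single (a, None) 1) S) = Mid (Db a) S
   + m3 (Poly_Mapping.single (a, None, None) 1) (TL S) - lin (\<lambda>p. Poly_Mapping.single (a, fst p, snd p) 1) S"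
  by (simp add: TL_def m2_def m3_def Mid_def Db_mult)

lemma C_L: "TL (Poly_Mapping.single (a, b) 1) = lin (\<lambda>q. Poly_Mapping.single (fst q, snd q, b) 1) (Db a)"
  by (simp add: TL_def)

lemma A_R: "TR (m2 S (Poly_Mapping.single (None, b) 1)) = m3 (TR S) (Poly_Mapping.single (None, None, b) 1)
   + lin (\<lambda>p. lin (\<lambda>q. Poly_Mapping.single (fst p, bmul (snd p) (fst q), snd q) 1) (Db b)) S
   - lin (\<lambda>p. Poly_Mapping.single (fst p, snd p, b) 1) S"
  by (simp add: TR_def m2_def m3_def Db_mult)

lemma B_R: "TR (m2 (Poly_Mapping.single (a, None) 1) S) = m3 (Poly_Mapping.single (a, None, None) 1) (TR S)"
  by (simp add: TR_def m2_def m3_def)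

lemma C_R: "TR (Poly_Mapping.single (a, b) 1) = lin (\<lambda>q. Poly_Mapping.single (a, fst q, snd q) 1) (Db b)"
  by (simp add: TR_def)

lemma TL_add [simp]: "TL (x + y) = TL x + TL y" by (simp add: TL_def)
lemma TL_diff [simp]: "TL (x - y) = TL x - TL y" by (simp add: TL_def)
lemma TR_add [simp]: "TR (x + y) = TR x + TR y" by (simp add: TR_def)
lemma TR_diff [simp]: "TR (x - y) = TR x - TR y" by (simp add: TR_def)

lemma coassoc_Dt: "TL (Dt t) = TR (Dt t)"
proof (induction t)
  case (Leaf b)
  then show ?case by (simp add: TL_def TR_def add_ac)
next
  case (Node t s)
  let ?E = "Poly_Mapping.single (None, None, Some s) 1"
  let ?F = "Poly_Mapping.single (Some t, None, None) 1"
  let ?X = "lin (\<lambda>p. Poly_Mapping.single (Some t, fst p, snd p) 1) (Dt s)"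
  let ?Y = "lin (\<lambda>q. Poly_Mapping.single (fst q, snd q, Some s) 1) (Dt t)"
  let ?M = "lin (\<lambda>p. lin (\<lambda>q. Poly_Mapping.single (fst p, bmul (snd p) (fst q), snd q) 1) (Dt s)) (Dt t)"
  have L: "TL (Dt (Node t s)) = m3 (TL (Dt t)) ?E + (Mid (Dt t) (Dt s) + m3 ?F (TL (Dt s)) - ?X) - ?Y"
    by (simp only: Dt.simps TL_diff TL_add Db.simps A_L B_L C_L)
  have R: "TR (Dt (Node t s)) = (m3 (TR (Dt t)) ?E + ?M - ?Y) + m3 ?F (TR (Dt s)) - ?X"
    by (simp only: Dt.simps TR_diff TR_add Db.simps A_R B_R C_R)
  have M: "Mid (Dt t) (Dt s) = ?M"
    unfolding Mid_def by (rule lin_swap)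
  show ?case unfolding L R M Node.IH by (simp add: algebra_simps)
qed

lemma coassoc_Db: "TL (Db a) = TR (Db a)"
proof (cases a)
  case None thus ?thesis by (simp add: TL_def TR_def)
next
  case (Some t) thus ?thesis by (simp add: coassoc_Dt)
qed


lemma tens_left_TL: "tens_left (lin Db) T = TL T"
  unfolding tens_left_def sum2_lin TL_def by simp

lemma tens_right_TR: "tens_right (lin Db) T = TR T"
  unfolding tens_right_def sum2_lin TR_def by simp

lemma TL_lin: "TL (lin f x) = lin (\<lambda>a. TL (f a)) x" by (simp add: TL_def)
lemma TR_lin: "TR (lin f x) = lin (\<lambda>a. TR (f a)) x" by (simp add: TR_def)

lemma coassoc: "tens_left (lin Db) (lin Db x) = tens_right (lin Db) (lin Db x)"
  by (simp only: tens_left_TL tens_right_TR TL_lin TR_lin coassoc_Db)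

definition CL :: "('b, 'k::field) mag2 \<Rightarrow> ('b, 'k) mag" where
  "CL T = lin (\<lambda>p. if fst p = None then Poly_Mapping.single (snd p) 1 else 0) T"
definition CR :: "('b, 'k::field) mag2 \<Rightarrow> ('b, 'k) mag" where
  "CR T = lin (\<lambda>p. if snd p = None then Poly_Mapping.single (fst p) 1 else 0) T"

lemma counit_single: "counit (Poly_Mapping.single a 1 :: ('b, 'k::field) mag) = (if a = None then 1 else 0)"
  by (simp add: counit_def lookup_single when_def)

lemma counit_left_CL: "counit_left T = CL T"
  unfolding counit_left_def CL_def lin_def
  by (rule sum.cong) (auto simp: counit_single scal_scal)

lemma counit_right_CR: "counit_right T = CR T"
  unfolding counit_right_def CR_def lin_def
  by (rule sum.cong) (auto simp: counit_single scal_scal)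

lemma CL_Dt: "CL (Dt t :: ('b, 'k::field) mag2) = Poly_Mapping.single (Some t) 1"
proof (induction t)
  case (Leaf b)
  then show ?case by (simp add: CL_def)
next
  case (Node t s)
  have 1: "CL (m2 (Dt t :: ('b, 'k) mag2) (Poly_Mapping.single (None, Some s) 1)) = lin (\<lambda>a. Poly_Mapping.single (bmul a (Some s)) 1) (CL (Dt t))"
    by (simp add: CL_def m2_def cong: if_cong)
  have 2: "CL (m2 (Poly_Mapping.single (Some t, None) 1) (Dt s :: ('b, 'k) mag2)) = 0"
    by (simp add: CL_def m2_def cong: if_cong)
  have 3: "CL (Poly_Mapping.single (Some t, Some s) 1 :: ('b, 'k) mag2) = 0"
    by (simp add: CL_def)
  have "CL (Dt (Node t s) :: ('b, 'k) mag2) = CL (m2 (Dt t) (Poly_Mapping.single (None, Some s) 1))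
     + CL (m2 (Poly_Mapping.single (Some t, None) 1) (Dt s)) - CL (Poly_Mapping.single (Some t, Some s) 1)"
    by (simp only: Dt.simps CL_def lin_add lin_diff)
  then show ?case using 1 2 3 Node.IH by simp
qed

lemma CR_Dt: "CR (Dt t :: ('b, 'k::field) mag2) = Poly_Mapping.single (Some t) 1"
proof (induction t)
  case (Leaf b)
  then show ?case by (simp add: CR_def)
next
  case (Node t s)
  have 1: "CR (m2 (Dt t :: ('b, 'k) mag2) (Poly_Mapping.single (None, Some s) 1)) = 0"
    by (simp add: CR_def m2_def cong: if_cong)
  have 2: "CR (m2 (Poly_Mapping.single (Some t, None) 1) (Dt s :: ('b, 'k) mag2)) = lin (\<lambda>b. Poly_Mapping.single (bmul (Some t) b) 1) (CR (Dt s))"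
    by (simp add: CR_def m2_def cong: if_cong)
  have 3: "CR (Poly_Mapping.single (Some t, Some s) 1 :: ('b, 'k) mag2) = 0"
    by (simp add: CR_def)
  have "CR (Dt (Node t s) :: ('b, 'k) mag2) = CR (m2 (Dt t) (Poly_Mapping.single (None, Some s) 1))
     + CR (m2 (Poly_Mapping.single (Some t, None) 1) (Dt s)) - CR (Poly_Mapping.single (Some t, Some s) 1)"
    by (simp only: Dt.simps CR_def lin_add lin_diff)
  then show ?case using 1 2 3 Node.IH by simp
qed

lemma CL_Db: "CL (Db a) = Poly_Mapping.single a 1"
  by (cases a) (simp_all add: CL_Dt, simp add: CL_def)

lemma CR_Db: "CR (Db a) = Poly_Mapping.single a 1"
  by (cases a) (simp_all add: CR_Dt, simp add: CR_def)

lemma counit_left_Db: "counit_left (lin Db x) = x"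
proof -
  have "CL (lin Db x) = lin (\<lambda>a. CL (Db a)) x" by (simp add: CL_def)
  thus ?thesis by (simp add: counit_left_CL CL_Db)
qed

lemma counit_right_Db: "counit_right (lin Db x) = x"
proof -
  have "CR (lin Db x) = lin (\<lambda>a. CR (Db a)) x" by (simp add: CR_def)
  thus ?thesis by (simp add: counit_right_CR CR_Db)
qed


lemma bilin_eq:
  assumes "\<And>y. is_linear (\<lambda>x. F x y)" "\<And>x. is_linear (F x)"
    "\<And>y. is_linear (\<lambda>x. G x y)" "\<And>x. is_linear (G x)"
    "\<And>a b. F (Poly_Mapping.single a 1) (Poly_Mapping.single b 1) = G (Poly_Mapping.single a 1) (Poly_Mapping.single b 1)"
  shows "F x y = G x y"
proof -
  have "F x y = lin (\<lambda>a. F (Poly_Mapping.single a 1) y) x" by (rule linear_lin[OF assms(1)])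
  also have "\<dots> = lin (\<lambda>a. lin (\<lambda>b. F (Poly_Mapping.single a 1) (Poly_Mapping.single b 1)) y) x"
    by (subst linear_lin[OF assms(2)]) (rule refl)
  also have "\<dots> = lin (\<lambda>a. lin (\<lambda>b. G (Poly_Mapping.single a 1) (Poly_Mapping.single b 1)) y) x"
    by (simp add: assms(5))
  also have "\<dots> = lin (\<lambda>a. G (Poly_Mapping.single a 1) y) x"
    by (subst (2) linear_lin[OF assms(4)]) (rule refl)
  also have "\<dots> = G x y" by (rule linear_lin[OF assms(3), symmetric])
  finally show ?thesis .
qed

lemma spec_Db: "mag_coprod_spec (lin Db :: ('b, 'k::field) mag \<Rightarrow> ('b, 'k) mag2)"
  unfolding mag_coprod_spec_def
proof (intro conjI allI impI)
  show "is_linear (lin Db :: ('b, 'k::field) mag \<Rightarrow> ('b, 'k) mag2)" by (rule is_linear_lin)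
  show "lin Db mag_one = tens mag_one (mag_one :: ('b, 'k) mag)"
    by (simp add: mag_one_def tens_lin)
next
  fix v :: "('b, 'k) mag"
  assume "inV v"
  hence "lin Db v = lin (\<lambda>a. Poly_Mapping.single (a, None) 1 + Poly_Mapping.single (None, a) 1) v"
    by (intro lin_cong_keys) (auto simp: inV_def)
  thus "lin Db v = tens v mag_one + tens mag_one v"
    by (simp add: mag_one_def tens_lin)
next
  fix x y :: "('b, 'k) mag"
  show "lin Db (mag_mult x y) = mag2_mult (lin Db x) (tens mag_one y) + mag2_mult (tens x mag_one) (lin Db y) - tens x y"
  proof (rule bilin_eq[where F="\<lambda>x y. lin Db (mag_mult x y)"
        and G="\<lambda>x y. mag2_mult (lin Db x) (tens mag_one y) + mag2_mult (tens x mag_one) (lin Db y) - tens x y"])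
    fix y :: "('b, 'k) mag"
    show "is_linear (\<lambda>x. lin Db (mag_mult x y))"
      by (simp add: is_linear_def mag_mult_lin)
    show "is_linear (\<lambda>x. mag2_mult (lin Db x) (tens mag_one y) + mag2_mult (tens x mag_one) (lin Db y) - tens x y)"
      by (simp add: is_linear_def mag2_mult_lin m2_def tens_lin mag_one_def scal_add_right scal_diff_right algebra_simps)
  next
    fix x :: "('b, 'k) mag"
    show "is_linear (\<lambda>y. lin Db (mag_mult x y))"
      by (simp add: is_linear_def mag_mult_lin)
    show "is_linear (\<lambda>y. mag2_mult (lin Db x) (tens mag_one y) + mag2_mult (tens x mag_one) (lin Db y) - tens x y)"
      by (simp add: is_linear_def mag2_mult_lin m2_def tens_lin mag_one_def scal_add_right scal_diff_right algebra_simps)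
  next
    fix a b
    show "lin Db (mag_mult (Poly_Mapping.single a 1) (Poly_Mapping.single b 1)) =
      mag2_mult (lin Db (Poly_Mapping.single a 1)) (tens mag_one (Poly_Mapping.single b 1)) +
      mag2_mult (tens (Poly_Mapping.single a 1) mag_one) (lin Db (Poly_Mapping.single b 1)) -
      tens (Poly_Mapping.single a 1) (Poly_Mapping.single b (1::'k))"
      by (simp add: mag_mult_lin mag2_mult_lin tens_lin mag_one_def Db_mult)
  qed
qed

lemma spec_unique:
  fixes D :: "('b, 'k::field) mag \<Rightarrow> ('b, 'k) mag2"
  assumes "mag_coprod_spec D"
  shows "D = lin Db"
proof -
  have lin: "is_linear D" and one: "D mag_one = tens mag_one mag_one"
    and V: "\<And>v. inV v \<Longrightarrow> D v = tens v mag_one + tens mag_one v"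
    and M: "\<And>x y. D (mag_mult x y) = mag2_mult (D x) (tens mag_one y) + mag2_mult (tens x mag_one) (D y) - tens x y"
    using assms unfolding mag_coprod_spec_def by blast+
  have T: "D (Poly_Mapping.single (Some t) 1) = Dt t" for t
  proof (induction t)
    case (Leaf b)
    have "inV (Poly_Mapping.single (Some (Leaf b)) (1::'k))" by (simp add: inV_def)
    thus ?case using V by (simp add: tens_lin mag_one_def)
  next
    case (Node t s)
    have "Poly_Mapping.single (Some (Node t s)) (1::'k) = mag_mult (Poly_Mapping.single (Some t) 1) (Poly_Mapping.single (Some s) 1)"
      by (simp add: mag_mult_lin)
    hence "D (Poly_Mapping.single (Some (Node t s)) 1) = mag2_mult (D (Poly_Mapping.single (Some t) 1)) (tens mag_one (Poly_Mapping.single (Some s) 1))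
      + mag2_mult (tens (Poly_Mapping.single (Some t) 1) mag_one) (D (Poly_Mapping.single (Some s) 1)) - tens (Poly_Mapping.single (Some t) 1) (Poly_Mapping.single (Some s) 1)"
      using M by simp
    thus ?case using Node.IH by (simp add: tens_lin mag_one_def mag2_mult_lin)
  qed
  have B: "D (Poly_Mapping.single a 1) = Db a" for a
    using one T by (cases a) (simp_all add: tens_lin mag_one_def)
  show ?thesis
  proof
    fix x
    show "D x = lin Db x" using linear_lin[OF lin, of x] B by simp
  qed
qed


theorem proposition1p3:
  shows "(\<exists>!D :: ('b, 'k::field) mag \<Rightarrow> ('b, 'k) mag2. mag_coprod_spec D) \<and>
    (\<forall>D :: ('b, 'k) mag \<Rightarrow> ('b, 'k) mag2. mag_coprod_spec D \<longrightarrow>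
        (\<forall>x. tens_left D (D x) = tens_right D (D x)) \<and> asc_mag_bialgebra D)"
proof (intro conjI allI impI)
  show "\<exists>!D :: ('b, 'k::field) mag \<Rightarrow> ('b, 'k) mag2. mag_coprod_spec D"
    using spec_Db spec_unique by blast
next
  fix D :: "('b, 'k) mag \<Rightarrow> ('b, 'k) mag2"
  assume S: "mag_coprod_spec D"
  hence DD: "D = lin Db" by (rule spec_unique)
  show "\<And>x. tens_left D (D x) = tens_right D (D x)"
    unfolding DD by (rule coassoc)
  show "asc_mag_bialgebra D"
    unfolding asc_mag_bialgebra_def
  proof (intro conjI allI)
    fix x :: "('b, 'k) mag"
    show "mag_mult mag_one x = x" "mag_mult x mag_one = x"
      by (simp_all add: mag_mult_lin mag_one_def)
  next
    show "is_linear D" using S unfolding mag_coprod_spec_def by blast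
  next
    fix x show "tens_left D (D x) = tens_right D (D x)" unfolding DD by (rule coassoc)
  next
    fix x y :: "('b, 'k) mag"
    show "counit (x + y) = counit x + counit y" by (simp add: counit_def lookup_add)
  next
    fix c and x :: "('b, 'k) mag"
    show "counit (scal c x) = c * counit x" by (simp add: counit_def)
  next
    fix x show "counit_left (D x) = x" "counit_right (D x) = x"
      unfolding DD by (rule counit_left_Db, rule counit_right_Db)
  next
    show "D mag_one = tens mag_one mag_one" using S unfolding mag_coprod_spec_def by blast
  next
    fix x y show "D (mag_mult x y) = mag2_mult (D x) (tens mag_one y) + mag2_mult (tens x mag_one) (D y) - tens x y"
      using S unfolding mag_coprod_spec_def by blast
  qed
qed

end
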